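(* Let $(X,d,f)$ be a TDS, $\alpha\ge0$, $s>0$, $n\in\mathbb N$, $\varepsilon>0$ and $\varphi\in C(X,\mathbb R)$ with $\varphi>0$. Let $K$ be a non-empty compact subset of $X$. If $c:=W^\alpha(K,s,\varepsilon,n,\varphi)>0$, then there exists a Borel probability measure $\mu$ on $X$ with $\mu(K)=1$ such that for all $x\in X$ and all $m\ge n$, $$\mu(B^\alpha_m(x,\varepsilon))\le\frac1c\exp(-s\,S_m\varphi(x)).$$
   Context: A TDS $(X,d,f)$: compact metric space and continuous $f$. $S_n\varphi(x)=\sum_{j=0}^{n-1}\varphi(f^jx)$; $d_n^\alpha(x,y)=\max_{0\le i\le n-1}e^{\alpha i}d(f^ix,f^iy)$; $B_n^\alpha(x,\varepsilon)=\{y:d_n^\alpha(x,y)<\varepsilon\}$. For a bounded $\xi:X\to\mathbb R$, $W^\alpha(\xi,s,\varepsilon,n,\varphi)=\inf\sum_ic_i\exp(-s\,S_{n_i}\varphi(x_i))$, the infimum over all finite or countable collections $\{(B^\alpha_{n_i}(x_i,\varepsilon),c_i)\}$ with $x_i\in X$, $n_i\ge n$, $0<c_i<\infty$ and $\sum_ic_i\chi_{B^\alpha_{n_i}(x_i,\varepsilon)}\ge\xi$; and $W^\alpha(K,s,\varepsilon,n,\varphi)=W^\alpha(\chi_K,s,\varepsilon,n,\varphi)$. *)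

theory Defs
  imports "HOL-Probability.Probability"
begin

definition birkhoff_sum :: "('a \<Rightarrow> 'a) \<Rightarrow> ('a \<Rightarrow> real) \<Rightarrow> nat \<Rightarrow> 'a \<Rightarrow> real" where
  "birkhoff_sum f \<phi> n x = (\<Sum>j<n. \<phi> ((f ^^ j) x))"

text \<open>Weighted Bowen metric d_n^alpha (for n >= 1).\<close>
definition dist_bowen :: "('a::metric_space \<Rightarrow> 'a) \<Rightarrow> real \<Rightarrow> nat \<Rightarrow> 'a \<Rightarrow> 'a \<Rightarrow> real" where
  "dist_bowen f \<alpha> n x y = Max ((\<lambda>i. exp (\<alpha> * real i) * dist ((f ^^ i) x) ((f ^^ i) y)) ` {..<n})"

definition bowen_ball :: "('a::metric_space \<Rightarrow> 'a) \<Rightarrow> real \<Rightarrow> nat \<Rightarrow> 'a \<Rightarrow> real \<Rightarrow> 'a set" where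
  "bowen_ball f \<alpha> n x \<epsilon> = {y. dist_bowen f \<alpha> n x y < \<epsilon>}"

text \<open>W^alpha(xi, s, eps, n, phi): infimum over finite or countable families, indexed by
  a set I of naturals, of centres x i, times k i >= n and weights c i > 0 whose weighted
  indicator sum dominates xi.\<close>
definition W_alpha :: "('a::metric_space \<Rightarrow> 'a) \<Rightarrow> real \<Rightarrow> ('a \<Rightarrow> real) \<Rightarrow> real \<Rightarrow> real \<Rightarrow> nat
    \<Rightarrow> ('a \<Rightarrow> real) \<Rightarrow> ennreal" where
  "W_alpha f \<alpha> \<xi> s \<epsilon> n \<phi> =
     (INF F \<in> {(I :: nat set, x :: nat \<Rightarrow> 'a, k :: nat \<Rightarrow> nat, c :: nat \<Rightarrow> real).
                 (\<forall>i\<in>I. n \<le> k i \<and> 0 < c i) \<and>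
                 (\<forall>y. ennreal (\<xi> y) \<le>
                       (\<Sum>i. if i \<in> I then ennreal (c i) * indicator (bowen_ball f \<alpha> (k i) (x i) \<epsilon>) y
                             else 0))}.
        (case F of (I, x, k, c) \<Rightarrow>
          (\<Sum>i. if i \<in> I then ennreal (c i * exp (- s * birkhoff_sum f \<phi> (k i) (x i))) else 0)))"

definition W_alpha_set :: "('a::metric_space \<Rightarrow> 'a) \<Rightarrow> real \<Rightarrow> 'a set \<Rightarrow> real \<Rightarrow> real \<Rightarrow> nat
    \<Rightarrow> ('a \<Rightarrow> real) \<Rightarrow> ennreal" where
  "W_alpha_set f \<alpha> K s \<epsilon> n \<phi> = W_alpha f \<alpha> (indicator K) s \<epsilon> n \<phi>"

end

theory Submission
  imports Defs "HOL-Analysis.Analysis"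
begin

definition covs :: "('a::metric_space \<Rightarrow> 'a) \<Rightarrow> real \<Rightarrow> ('a \<Rightarrow> real) \<Rightarrow> real \<Rightarrow> nat \<Rightarrow> (nat set \<times> (nat \<Rightarrow> 'a) \<times> (nat \<Rightarrow> nat) \<times> (nat \<Rightarrow> real)) set" where
  "covs f \<alpha> \<xi> \<epsilon> n = {(I :: nat set, x :: nat \<Rightarrow> 'a, k :: nat \<Rightarrow> nat, c :: nat \<Rightarrow> real).
                 (\<forall>i\<in>I. n \<le> k i \<and> 0 < c i) \<and>
                 (\<forall>y. ennreal (\<xi> y) \<le>
                       (\<Sum>i. if i \<in> I then ennreal (c i) * indicator (bowen_ball f \<alpha> (k i) (x i) \<epsilon>) y
                             else 0))}"

definition cost :: "('a::metric_space \<Rightarrow> 'a) \<Rightarrow> real \<Rightarrow> ('a \<Rightarrow> real) \<Rightarrow> (nat set \<times> (nat \<Rightarrow> 'a) \<times> (nat \<Rightarrow> nat) \<times> (nat \<Rightarrow> real)) \<Rightarrow> ennreal" where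
  "cost f s \<phi> F = (case F of (I, x, k, c) \<Rightarrow>
          (\<Sum>i. if i \<in> I then ennreal (c i * exp (- s * birkhoff_sum f \<phi> (k i) (x i))) else 0))"

lemma W_eq: "W_alpha f \<alpha> \<xi> s \<epsilon> n \<phi> = (INF F\<in>covs f \<alpha> \<xi> \<epsilon> n. cost f s \<phi> F)"
  unfolding W_alpha_def covs_def cost_def by simp

lemma suminf_interleave:
  fixes g :: "nat \<Rightarrow> ennreal"
  shows "(\<Sum>j. g j) = (\<Sum>i. g (2*i)) + (\<Sum>i. g (2*i+1))"
proof -
  have "(\<lambda>i. sum g {i*2..<i*2+2}) sums (\<Sum>j. g j)"
    by (rule sums_group) (auto intro: summable_sums summableI)
  moreover have "\<And>i. sum g {i*2..<i*2+2} = g (2*i) + g (2*i+1)"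
    by (simp add: mult.commute numeral_2_eq_2)
  ultimately have "(\<Sum>j. g j) = (\<Sum>i. g (2*i) + g (2*i+1))"
    by (simp add: sums_iff)
  also have "\<dots> = (\<Sum>i. g (2*i)) + (\<Sum>i. g (2*i+1))"
    by (rule suminf_add[symmetric]) (auto intro: summableI)
  finally show ?thesis .
qed

lemma ennreal_Inf_add_le:
  fixes x :: ennreal
  assumes "\<And>a b. a \<in> A \<Longrightarrow> b \<in> B \<Longrightarrow> x \<le> a + b"
  shows "x \<le> Inf A + Inf B"
proof (cases "A = {} \<or> B = {}")
  case True then show ?thesis by (auto simp: top_add)
next
  case False
  have c1: "\<And>b. Inf A + b = Inf ((\<lambda>a. a + b) ` A)"
    by (rule continuous_at_Inf_mono) (use False in \<open>auto simp: mono_def intro: add_right_mono continuous_intros\<close>)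
  have c2: "Inf A + Inf B = Inf ((\<lambda>b. Inf A + b) ` B)"
    by (rule continuous_at_Inf_mono) (use False in \<open>auto simp: mono_def intro: add_left_mono continuous_intros\<close>)
  have "\<And>b. b \<in> B \<Longrightarrow> x \<le> Inf A + b"
    unfolding c1 by (auto intro!: Inf_greatest assms)
  then show ?thesis unfolding c2 by (auto intro!: Inf_greatest)
qed

lemma ennreal_Inf_mult_le:
  fixes x t :: ennreal
  assumes "\<And>a. a \<in> A \<Longrightarrow> x \<le> t * a" and "0 < t" and "t < top"
  shows "x \<le> t * Inf A"
proof (cases "A = {}")
  case True then show ?thesis using assms by (simp add: ennreal_mult_top)
next
  case False
  have "continuous_on UNIV (\<lambda>x. t * x)"
    by (rule ennreal_continuous_on_cmult) (auto simp: assms continuous_on_id)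
  then have cc: "continuous (at_right (Inf A)) ((*) t)"
    by (metis continuous_on_eq_continuous_within UNIV_I continuous_within_subset subset_UNIV)
  have c1: "t * Inf A = Inf ((\<lambda>a. t * a) ` A)"
    by (rule continuous_at_Inf_mono) (use False assms cc in \<open>auto simp: mono_def intro: mult_left_mono\<close>)
  show ?thesis unfolding c1 by (auto intro!: Inf_greatest assms)
qed

lemma W_le_cost: "F \<in> covs f \<alpha> \<xi> \<epsilon> n \<Longrightarrow> W_alpha f \<alpha> \<xi> s \<epsilon> n \<phi> \<le> cost f s \<phi> F"
  unfolding W_eq by (rule INF_lower)

lemma W_nonpos: assumes "\<And>y. \<xi> y \<le> 0" shows "W_alpha f \<alpha> \<xi> s \<epsilon> n \<phi> = 0"
proof -
  have "({}, undefined, undefined, undefined) \<in> covs f \<alpha> \<xi> \<epsilon> n"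
    using assms by (simp add: covs_def ennreal_eq_0_iff)
  from W_le_cost[OF this, of s \<phi>] show ?thesis by (simp add: cost_def)
qed

lemma W_mono: assumes "\<And>y. \<xi> y \<le> \<xi>' y"
  shows "W_alpha f \<alpha> \<xi> s \<epsilon> n \<phi> \<le> W_alpha f \<alpha> \<xi>' s \<epsilon> n \<phi>"
  unfolding W_eq
proof (rule INF_superset_mono)
  show "covs f \<alpha> \<xi>' \<epsilon> n \<subseteq> covs f \<alpha> \<xi> \<epsilon> n"
    unfolding covs_def using assms by (auto intro: order_trans[OF ennreal_leI])
qed simp

lemma W_sub:
  assumes "\<And>y. ennreal (\<xi> y) \<le> ennreal (\<xi>1 y) + ennreal (\<xi>2 y)"
  shows "W_alpha f \<alpha> \<xi> s \<epsilon> n \<phi> \<le> W_alpha f \<alpha> \<xi>1 s \<epsilon> n \<phi> + W_alpha f \<alpha> \<xi>2 s \<epsilon> n \<phi>"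
  unfolding W_eq
proof (rule ennreal_Inf_add_le, elim imageE, clarify)
  fix I1 x1 k1 c1 I2 x2 k2 c2
  assume F1: "(I1, x1, k1, c1) \<in> covs f \<alpha> \<xi>1 \<epsilon> n" and F2: "(I2, x2, k2, c2) \<in> covs f \<alpha> \<xi>2 \<epsilon> n"
  define I where "I = {j. if even j then j div 2 \<in> I1 else j div 2 \<in> I2}"
  define x where "x = (\<lambda>j. if even j then x1 (j div 2) else x2 (j div 2))"
  define k where "k = (\<lambda>j. if even j then k1 (j div 2) else k2 (j div 2))"
  define c where "c = (\<lambda>j. if even j then c1 (j div 2) else c2 (j div 2))"
  have "(I, x, k, c) \<in> covs f \<alpha> \<xi> \<epsilon> n"
    unfolding covs_def
  proof (clarify, intro conjI allI ballI)
    fix i assume "i \<in> I" then show "n \<le> k i" "0 < c i"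
      using F1 F2 by (auto simp: covs_def I_def k_def c_def split: if_splits)
  next
    fix y
    have "ennreal (\<xi> y) \<le> ennreal (\<xi>1 y) + ennreal (\<xi>2 y)" by (rule assms)
    also have "\<dots> \<le> (\<Sum>i. if i \<in> I1 then ennreal (c1 i) * indicator (bowen_ball f \<alpha> (k1 i) (x1 i) \<epsilon>) y else 0)
        + (\<Sum>i. if i \<in> I2 then ennreal (c2 i) * indicator (bowen_ball f \<alpha> (k2 i) (x2 i) \<epsilon>) y else 0)"
      using F1 F2 unfolding covs_def by (intro add_mono) auto
    also have "\<dots> = (\<Sum>i. if i \<in> I then ennreal (c i) * indicator (bowen_ball f \<alpha> (k i) (x i) \<epsilon>) y else 0)"
      unfolding I_def x_def k_def c_def by (rule sym, subst suminf_interleave) (simp cong: if_cong)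
    finally show "ennreal (\<xi> y) \<le> (\<Sum>i. if i \<in> I then ennreal (c i) * indicator (bowen_ball f \<alpha> (k i) (x i) \<epsilon>) y else 0)" .
  qed
  then have "(INF F\<in>covs f \<alpha> \<xi> \<epsilon> n. cost f s \<phi> F) \<le> cost f s \<phi> (I, x, k, c)" by (rule INF_lower)
  also have "cost f s \<phi> (I, x, k, c) = cost f s \<phi> (I1, x1, k1, c1) + cost f s \<phi> (I2, x2, k2, c2)"
    unfolding cost_def I_def x_def k_def c_def by (subst suminf_interleave) (simp cong: if_cong)
  finally show "(INF F\<in>covs f \<alpha> \<xi> \<epsilon> n. cost f s \<phi> F) \<le> cost f s \<phi> (I1, x1, k1, c1) + cost f s \<phi> (I2, x2, k2, c2)" .
qed

lemma W_scale_le: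
  assumes "t > 0"
  shows "W_alpha f \<alpha> (\<lambda>y. t * \<xi> y) s \<epsilon> n \<phi> \<le> ennreal t * W_alpha f \<alpha> \<xi> s \<epsilon> n \<phi>"
  unfolding W_eq
proof (rule ennreal_Inf_mult_le, clarify)
  fix I x k c
  assume F: "(I, x, k, c) \<in> covs f \<alpha> \<xi> \<epsilon> n"
  have "(I, x, k, \<lambda>i. t * c i) \<in> covs f \<alpha> (\<lambda>y. t * \<xi> y) \<epsilon> n"
    unfolding covs_def
  proof (clarify, intro conjI allI ballI)
    fix i assume "i \<in> I" then show "n \<le> k i" "0 < t * c i"
      using F assms by (auto simp: covs_def)
  next
    fix y
    have "ennreal (t * \<xi> y) = ennreal t * ennreal (\<xi> y)"
      using assms by (simp add: ennreal_mult')
    also have "\<dots> \<le> ennreal t * (\<Sum>i. if i \<in> I then ennreal (c i) * indicator (bowen_ball f \<alpha> (k i) (x i) \<epsilon>) y else 0)"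
      using F unfolding covs_def by (intro mult_left_mono) auto
    also have "\<dots> = (\<Sum>i. if i \<in> I then ennreal (t * c i) * indicator (bowen_ball f \<alpha> (k i) (x i) \<epsilon>) y else 0)"
      unfolding ennreal_suminf_cmult[symmetric]
      using assms by (intro suminf_cong) (auto simp: ennreal_mult' mult.assoc)
    finally show "ennreal (t * \<xi> y) \<le> \<dots>" .
  qed
  then have "(INF F\<in>covs f \<alpha> (\<lambda>y. t * \<xi> y) \<epsilon> n. cost f s \<phi> F) \<le> cost f s \<phi> (I, x, k, \<lambda>i. t * c i)" by (rule INF_lower)
  also have "\<dots> = ennreal t * cost f s \<phi> (I, x, k, c)"
    unfolding cost_def prod.case using assms
    by (subst ennreal_suminf_cmult[symmetric], intro suminf_cong) (auto simp: ennreal_mult' mult.assoc)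
  finally show "(INF F\<in>covs f \<alpha> (\<lambda>y. t * \<xi> y) \<epsilon> n. cost f s \<phi> F) \<le> ennreal t * cost f s \<phi> (I, x, k, c)" .
qed (use assms in auto)

lemma suminf_single0: "(\<Sum>i. if i = 0 then a else (0::ennreal)) = a"
  by (subst suminf_finite[of "{0}"]) auto

lemma W_ball:
  assumes "n \<le> m"
  shows "W_alpha f \<alpha> (indicator (bowen_ball f \<alpha> m x \<epsilon>)) s \<epsilon> n \<phi> \<le> ennreal (exp (- s * birkhoff_sum f \<phi> m x))"
proof -
  have "({0}, \<lambda>_. x, \<lambda>_. m, \<lambda>_. 1) \<in> covs f \<alpha> (indicator (bowen_ball f \<alpha> m x \<epsilon>)) \<epsilon> n"
    unfolding covs_def using assms
    by (auto simp: suminf_single0 indicator_def)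
  from W_le_cost[OF this, of s \<phi>] show ?thesis
    by (simp add: cost_def suminf_single0)
qed

definition hb_good :: "(('a \<Rightarrow> real) \<Rightarrow> real) \<Rightarrow> ('a \<Rightarrow> real) set \<Rightarrow> (('a \<Rightarrow> real) \<times> real) set \<Rightarrow> bool" where
  "hb_good p V G \<longleftrightarrow> G \<subseteq> V \<times> UNIV \<and>
     (\<forall>g a h b. (g,a) \<in> G \<longrightarrow> (h,b) \<in> G \<longrightarrow> ((\<lambda>y. g y + h y), a + b) \<in> G) \<and>
     (\<forall>g a t. (g,a) \<in> G \<longrightarrow> ((\<lambda>y. t * g y), t * a) \<in> G) \<and>
     (\<forall>g a b. (g,a) \<in> G \<longrightarrow> (g,b) \<in> G \<longrightarrow> a = b) \<and>
     (\<forall>g a. (g,a) \<in> G \<longrightarrow> a \<le> p g)"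

lemma hb_goodD:
  assumes "hb_good p V G"
  shows "G \<subseteq> V \<times> UNIV"
    and "(g,a) \<in> G \<Longrightarrow> (h,b) \<in> G \<Longrightarrow> ((\<lambda>y. g y + h y), a + b) \<in> G"
    and "(g,a) \<in> G \<Longrightarrow> ((\<lambda>y. t * g y), t * a) \<in> G"
    and "(g,a) \<in> G \<Longrightarrow> (g,b) \<in> G \<Longrightarrow> a = b"
    and "(g,a) \<in> G \<Longrightarrow> a \<le> p g"
  using assms unfolding hb_good_def by blast+

lemma hahn_banach_fun:
  fixes p :: "('a \<Rightarrow> real) \<Rightarrow> real" and V :: "('a \<Rightarrow> real) set" and e :: "'a \<Rightarrow> real"
  assumes Vadd: "\<And>g h. g \<in> V \<Longrightarrow> h \<in> V \<Longrightarrow> (\<lambda>y. g y + h y) \<in> V"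
    and Vscale: "\<And>g t. g \<in> V \<Longrightarrow> (\<lambda>y. t * g y) \<in> V"
    and padd: "\<And>g h. g \<in> V \<Longrightarrow> h \<in> V \<Longrightarrow> p (\<lambda>y. g y + h y) \<le> p g + p h"
    and pscale: "\<And>g t. g \<in> V \<Longrightarrow> t > 0 \<Longrightarrow> p (\<lambda>y. t * g y) = t * p g"
    and eV: "e \<in> V" and pe: "\<And>t. t \<le> p (\<lambda>y. t * e y)"
  shows "\<exists>L. (\<forall>g\<in>V. \<forall>h\<in>V. L (\<lambda>y. g y + h y) = L g + L h) \<and> (\<forall>g\<in>V. \<forall>t. L (\<lambda>y. t * g y) = t * L g)
            \<and> (\<forall>g\<in>V. L g \<le> p g) \<and> L e = 1"
proof -
  have Vsub: "(\<lambda>y. g y - h y) \<in> V" if "g \<in> V" "h \<in> V" for g h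
    using Vadd[OF that(1) Vscale[OF that(2), of "-1"]] by simp
  have z: "(\<lambda>_. 0) \<in> V" using Vscale[OF eV, of 0] by simp
  have p0: "p (\<lambda>_. 0) = 0" using pscale[OF z, of 2] by simp
  define G0 where "G0 = {((\<lambda>y. t * e y), t) | t. True}"
  define A where "A = {G. hb_good p V G \<and> G0 \<subseteq> G}"
  have e_nz: "\<exists>y. e y \<noteq> 0"
  proof (rule ccontr)
    assume "\<not> ?thesis"
    then have "(\<lambda>y. 1 * e y) = (\<lambda>_. 0)" by auto
    with pe[of 1] p0 show False by simp
  qed
  have G0A: "G0 \<in> A"
    unfolding A_def hb_good_def
  proof (intro CollectI conjI allI impI subset_refl)
    show "G0 \<subseteq> V \<times> UNIV" using Vscale[OF eV] by (auto simp: G0_def)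
  next
    fix g a h b assume "(g,a) \<in> G0" "(h,b) \<in> G0"
    then show "((\<lambda>y. g y + h y), a + b) \<in> G0"
      by (auto simp: G0_def intro!: exI[of _ "a+b"] simp: algebra_simps)
  next
    fix g a t assume "(g,a) \<in> G0"
    then show "((\<lambda>y. t * g y), t * a) \<in> G0"
      by (auto simp: G0_def intro!: exI[of _ "t*a"])
  next
    fix g a b assume "(g,a) \<in> G0" "(g,b) \<in> G0"
    then have "(\<lambda>y. a * e y) = (\<lambda>y. b * e y)" by (auto simp: G0_def)
    moreover obtain y where "e y \<noteq> 0" using e_nz by auto
    ultimately show "a = b" by (metis mult_cancel_right)
  next
    fix g a assume "(g,a) \<in> G0"
    then show "a \<le> p g" using pe by (auto simp: G0_def)
  qed
  have "\<exists>M\<in>A. \<forall>X\<in>A. M \<subseteq> X \<longrightarrow> X = M"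
  proof (rule subset_Zorn_nonempty)
    show "A \<noteq> {}" using G0A by auto
  next
    fix C assume Cne: "C \<noteq> {}" and ch: "subset.chain A C"
    have CA: "C \<subseteq> A" and cmp: "\<And>X Y. X \<in> C \<Longrightarrow> Y \<in> C \<Longrightarrow> X \<subseteq> Y \<or> Y \<subseteq> X"
      using ch by (auto simp: subset_chain_def)
    have two: "\<exists>Z\<in>C. (g,a) \<in> Z \<and> (h,b) \<in> Z" if "(g,a) \<in> \<Union>C" "(h,b) \<in> \<Union>C" for g a h b
      using that cmp by blast
    have gd: "\<And>Z. Z \<in> C \<Longrightarrow> hb_good p V Z" using CA by (auto simp: A_def)
    show "\<Union>C \<in> A"
      unfolding A_def
    proof (intro CollectI conjI)
      show "G0 \<subseteq> \<Union>C" using Cne CA by (auto simp: A_def)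
      show "hb_good p V (\<Union>C)"
        unfolding hb_good_def
      proof (intro conjI allI impI)
        show "\<Union>C \<subseteq> V \<times> UNIV"
        proof
          fix z assume "z \<in> \<Union>C"
          then obtain Z where "Z \<in> C" "z \<in> Z" by blast
          then show "z \<in> V \<times> UNIV" using hb_goodD(1)[OF gd[of Z]] by auto
        qed
      next
        fix g a h b assume "(g,a) \<in> \<Union>C" "(h,b) \<in> \<Union>C"
        then obtain Z where Z: "Z \<in> C" "(g,a) \<in> Z" "(h,b) \<in> Z" using two by blast
        have "((\<lambda>y. g y + h y), a + b) \<in> Z" by (rule hb_goodD(2)[OF gd[OF Z(1)] Z(2,3)])
        then show "((\<lambda>y. g y + h y), a + b) \<in> \<Union>C" using Z(1) by (rule UnionI[rotated])
      next
        fix g a t assume "(g,a) \<in> \<Union>C"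
        then obtain Z where "Z \<in> C" "(g,a) \<in> Z" by blast
        then show "((\<lambda>y. t * g y), t * a) \<in> \<Union>C" using hb_goodD(3)[OF gd[of Z]] by auto
      next
        fix g a b assume "(g,a) \<in> \<Union>C" "(g,b) \<in> \<Union>C"
        then obtain Z where "Z \<in> C" "(g,a) \<in> Z" "(g,b) \<in> Z" using two by blast
        then show "a = b" using hb_goodD(4)[OF gd[of Z]] by auto
      next
        fix g a assume "(g,a) \<in> \<Union>C"
        then obtain Z where "Z \<in> C" "(g,a) \<in> Z" by blast
        then show "a \<le> p g" using hb_goodD(5)[OF gd[of Z]] by auto
      qed
    qed
  qed
  then obtain M where MA: "M \<in> A" and Mmax: "\<And>X. X \<in> A \<Longrightarrow> M \<subseteq> X \<Longrightarrow> X = M" by blast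
  have Mgood: "hb_good p V M" and G0M: "G0 \<subseteq> M" using MA by (auto simp: A_def)
  have Madd: "\<And>g a h b. (g,a) \<in> M \<Longrightarrow> (h,b) \<in> M \<Longrightarrow> ((\<lambda>y. g y + h y), a + b) \<in> M"
    and Mscale: "\<And>g a t. (g,a) \<in> M \<Longrightarrow> ((\<lambda>y. t * g y), t * a) \<in> M"
    and Mfun: "\<And>g a b. (g,a) \<in> M \<Longrightarrow> (g,b) \<in> M \<Longrightarrow> a = b"
    and Mdom: "\<And>g a. (g,a) \<in> M \<Longrightarrow> a \<le> p g"
    and MV: "\<And>g a. (g,a) \<in> M \<Longrightarrow> g \<in> V"
    using hb_goodD[OF Mgood] by auto
  have total: "\<exists>a. (v,a) \<in> M" if vV: "v \<in> V" for v
  proof (rule ccontr)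
    assume nv: "\<not> (\<exists>a. (v,a) \<in> M)"
    have zM: "((\<lambda>_. 0), 0) \<in> M"
      using G0M unfolding G0_def by (auto dest!: subsetD[where c="((\<lambda>y. 0 * e y), 0)"])
    define S where "S = {b - p (\<lambda>y. h y - v y) | h b. (h,b) \<in> M}"
    have Sne: "S \<noteq> {}" using zM by (auto simp: S_def)
    have key: "b - p (\<lambda>y. h y - v y) \<le> p (\<lambda>y. g y + v y) - a" if "(h,b) \<in> M" "(g,a) \<in> M" for h b g a
    proof -
      have "b + a \<le> p (\<lambda>y. h y + g y)" using Mdom[OF Madd[OF that]] .
      also have "(\<lambda>y. h y + g y) = (\<lambda>y. (h y - v y) + (g y + v y))" by auto
      also have "p \<dots> \<le> p (\<lambda>y. h y - v y) + p (\<lambda>y. g y + v y)"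
        using MV that vV by (intro padd Vsub Vadd) auto
      finally show ?thesis by simp
    qed
    have bdd: "bdd_above S"
      unfolding bdd_above_def S_def using key[OF _ zM] by auto
    define r where "r = Sup S"
    have r_le: "r \<le> p (\<lambda>y. g y + v y) - a" if "(g,a) \<in> M" for g a
      unfolding r_def using Sne by (rule cSup_least) (auto simp: S_def intro: key[OF _ that])
    have r_ge: "a - p (\<lambda>y. g y - v y) \<le> r" if "(g,a) \<in> M" for g a
      unfolding r_def by (rule cSup_upper[OF _ bdd]) (use that in \<open>auto simp: S_def\<close>)
    define M' where "M' = {((\<lambda>y. g y + t * v y), a + t * r) | g a t. (g,a) \<in> M}"
    have notD: False if "(g,a) \<in> M" "(g',a') \<in> M" "\<And>y. g y + t * v y = g' y + t' * v y" "t \<noteq> t'" for g a g' a' t t'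
    proof -
      define u where "u = 1 / (t' - t)"
      have "((\<lambda>y. u * (g y + (-1) * g' y)), u * (a + (-1) * a')) \<in> M"
        using that by (intro Mscale Madd) auto
      moreover have "(\<lambda>y. u * (g y + (-1) * g' y)) = v"
      proof
        fix y
        have "g y - g' y = (t' - t) * v y" using that(3)[of y] by (simp add: algebra_simps)
        then show "u * (g y + (-1) * g' y) = v y" using that(4) by (simp add: u_def field_simps)
      qed
      ultimately show False using nv by auto
    qed
    have M'A: "M' \<in> A"
      unfolding A_def hb_good_def
    proof (intro CollectI conjI allI impI)
      show "M' \<subseteq> V \<times> UNIV" unfolding M'_def using MV vV by (auto intro!: Vadd Vscale)
    next
      show "G0 \<subseteq> M'"
      proof
        fix z assume "z \<in> G0"
        then have "z \<in> M" using G0M by auto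
        then obtain g a where z: "z = (g,a)" "(g,a) \<in> M" by (cases z) auto
        show "z \<in> M'" unfolding M'_def z(1)
          by (rule CollectI, rule exI[of _ g], rule exI[of _ a], rule exI[of _ "0::real"]) (simp add: z(2))
      qed
    next
      fix g a h b assume "(g,a) \<in> M'" "(h,b) \<in> M'"
      then obtain g1 a1 t1 g2 a2 t2 where "(g1,a1) \<in> M" "(g2,a2) \<in> M"
        "g = (\<lambda>y. g1 y + t1 * v y)" "a = a1 + t1 * r" "h = (\<lambda>y. g2 y + t2 * v y)" "b = a2 + t2 * r"
        unfolding M'_def by blast
      note F = this
      show "((\<lambda>y. g y + h y), a + b) \<in> M'"
        unfolding M'_def
        by (rule CollectI, rule exI[of _ "\<lambda>y. g1 y + g2 y"], rule exI[of _ "a1 + a2"], rule exI[of _ "t1 + t2"])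
           (use F in \<open>auto intro!: Madd simp: algebra_simps\<close>)
    next
      fix g a t assume "(g,a) \<in> M'"
      then obtain g1 a1 t1 where "(g1,a1) \<in> M" "g = (\<lambda>y. g1 y + t1 * v y)" "a = a1 + t1 * r"
        unfolding M'_def by blast
      note F = this
      show "((\<lambda>y. t * g y), t * a) \<in> M'"
        unfolding M'_def
        by (rule CollectI, rule exI[of _ "\<lambda>y. t * g1 y"], rule exI[of _ "t * a1"], rule exI[of _ "t * t1"])
           (use F Mscale[OF F(1), of t] in \<open>auto simp: algebra_simps\<close>)
    next
      fix g a b assume "(g,a) \<in> M'" "(g,b) \<in> M'"
      then obtain g1 a1 t1 g2 a2 t2 where h1: "(g1,a1) \<in> M" "(g2,a2) \<in> M"
        "g = (\<lambda>y. g1 y + t1 * v y)" "a = a1 + t1 * r" "g = (\<lambda>y. g2 y + t2 * v y)" "b = a2 + t2 * r"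
        unfolding M'_def by blast
      have eqy: "\<And>y. g1 y + t1 * v y = g2 y + t2 * v y" using h1 by metis
      have "t1 = t2" using notD[OF h1(1,2) eqy] by blast
      then have "g1 = g2" using eqy by auto
      then show "a = b" using h1 Mfun \<open>t1 = t2\<close> by auto
    next
      fix g a assume "(g,a) \<in> M'"
      then obtain g1 a1 t where h1: "(g1,a1) \<in> M" "g = (\<lambda>y. g1 y + t * v y)" "a = a1 + t * r"
        unfolding M'_def by blast
      have g1V: "g1 \<in> V" using MV h1 by auto
      consider "t = 0" | "t > 0" | "t < 0" by linarith
      then show "a \<le> p g"
      proof cases
        case 1 then show ?thesis using h1 Mdom by auto
      next
        case 2
        have m: "((\<lambda>y. (1/t) * g1 y), (1/t) * a1) \<in> M" by (rule Mscale[OF h1(1)])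
        have "r \<le> p (\<lambda>y. (1/t) * g1 y + v y) - (1/t) * a1" using r_le[OF m] .
        then have "t * r \<le> t * p (\<lambda>y. (1/t) * g1 y + v y) - a1" using 2
          by (simp add: field_simps)
        also have "t * p (\<lambda>y. (1/t) * g1 y + v y) = p (\<lambda>y. t * ((1/t) * g1 y + v y))"
          using 2 g1V vV by (intro pscale[symmetric] Vadd Vscale) auto
        also have "(\<lambda>y. t * ((1/t) * g1 y + v y)) = g" using 2 h1 by (auto simp: field_simps)
        finally show ?thesis using h1 by simp
      next
        case 3
        define u where "u = - t"
        have u: "u > 0" using 3 by (simp add: u_def)
        have m: "((\<lambda>y. (1/u) * g1 y), (1/u) * a1) \<in> M" by (rule Mscale[OF h1(1)])
        have "(1/u) * a1 - p (\<lambda>y. (1/u) * g1 y - v y) \<le> r" using r_ge[OF m] .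
        then have "a1 - u * r \<le> u * p (\<lambda>y. (1/u) * g1 y - v y)" using u
          by (simp add: field_simps)
        also have "u * p (\<lambda>y. (1/u) * g1 y - v y) = p (\<lambda>y. u * ((1/u) * g1 y - v y))"
          using u g1V vV by (intro pscale[symmetric] Vsub Vscale) auto
        also have "(\<lambda>y. u * ((1/u) * g1 y - v y)) = g" using u h1 by (auto simp: field_simps u_def)
        finally show ?thesis using h1 by (simp add: u_def)
      qed
    qed
    have "M \<subseteq> M'"
    proof
      fix z assume "z \<in> M"
      then obtain g a where z: "z = (g,a)" "(g,a) \<in> M" by (cases z) auto
      show "z \<in> M'" unfolding M'_def z(1)
        by (rule CollectI, rule exI[of _ g], rule exI[of _ a], rule exI[of _ "0::real"]) (simp add: z(2))
    qed
    then have "M' = M" using Mmax M'A by blast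
    moreover have "(v, r) \<in> M'" unfolding M'_def
      by (rule CollectI, rule exI[of _ "\<lambda>_. 0"], rule exI[of _ 0], rule exI[of _ "1::real"]) (simp add: zM)
    ultimately show False using nv by auto
  qed
  define L where "L g = (THE a. (g,a) \<in> M)" for g
  have LM: "(g, L g) \<in> M" if gV: "g \<in> V" for g
  proof -
    obtain a where ga: "(g,a) \<in> M" using total[OF gV] by auto
    show ?thesis unfolding L_def
    proof (rule theI)
      show "(g,a) \<in> M" by (rule ga)
    next
      fix x assume "(g,x) \<in> M" then show "x = a" by (rule Mfun[OF _ ga])
    qed
  qed
  show ?thesis
  proof (intro exI[of _ L] conjI ballI allI)
    fix g h assume g: "g \<in> V" and h: "h \<in> V"
    show "L (\<lambda>y. g y + h y) = L g + L h"
      by (rule Mfun[OF LM[OF Vadd[OF g h]] Madd[OF LM[OF g] LM[OF h]]])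
  next
    fix g t assume g: "g \<in> V"
    show "L (\<lambda>y. t * g y) = t * L g"
      by (rule Mfun[OF LM[OF Vscale[OF g]] Mscale[OF LM[OF g]]])
  next
    fix g assume "g \<in> V" then show "L g \<le> p g" by (rule Mdom[OF LM])
  next
    have "(\<lambda>y. 1 * e y, 1) \<in> G0" unfolding G0_def by blast
    then have "(e, 1) \<in> M" using G0M by auto
    then show "L e = 1" by (rule Mfun[OF LM[OF eV]])
  qed
qed

lemma measure_from_content:
  fixes \<nu> :: "'a::metric_space set \<Rightarrow> real"
  assumes cpt: "compact (UNIV :: 'a set)"
    and nonneg: "\<And>A. 0 \<le> \<nu> A"
    and add: "\<And>A B. A \<inter> B = {} \<Longrightarrow> \<nu> (A \<union> B) = \<nu> A + \<nu> B"
    and univ: "\<nu> UNIV = 1"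
  shows "\<exists>\<mu>. sets \<mu> = sets borel \<and> prob_space \<mu> \<and>
     (\<forall>U b. open U \<longrightarrow> (\<forall>C. closed C \<longrightarrow> C \<subseteq> U \<longrightarrow> \<nu> C \<le> b) \<longrightarrow> measure \<mu> U \<le> b) \<and>
     (\<forall>C. closed C \<longrightarrow> \<nu> C \<le> measure \<mu> C)"
proof -
  have nu_empty: "\<nu> {} = 0" using add[of "{}" "{}"] by simp
  have mono: "\<nu> A \<le> \<nu> B" if "A \<subseteq> B" for A B
  proof -
    have "B = A \<union> (B - A)" using that by auto
    then have "\<nu> B = \<nu> A + \<nu> (B - A)" using add[of A "B - A"] by auto
    then show ?thesis using nonneg[of "B - A"] by simp
  qed
  have sub: "\<nu> (A \<union> B) \<le> \<nu> A + \<nu> B" for A B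
  proof -
    have "A \<union> B = A \<union> (B - A)" by auto
    then have "\<nu> (A \<union> B) = \<nu> A + \<nu> (B - A)" using add[of A "B - A"] by auto
    then show ?thesis using mono[of "B - A" B] by simp
  qed
  have le1: "\<nu> A \<le> 1" for A using mono[of A UNIV] univ by simp
  define lam where "lam U = Sup {\<nu> C | C. closed C \<and> C \<subseteq> U}" for U :: "'a set"
  have lam_ne: "{\<nu> C | C. closed C \<and> C \<subseteq> U} \<noteq> {}" for U by (auto intro!: exI[of _ "{}"])
  have lam_bdd: "bdd_above {\<nu> C | C. closed C \<and> C \<subseteq> U}" for U
    using le1 by (auto intro!: bdd_aboveI[of _ 1])
  have lam_ge: "\<nu> C \<le> lam U" if "closed C" "C \<subseteq> U" for C U
    unfolding lam_def by (rule cSup_upper[OF _ lam_bdd]) (use that in auto)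
  have lam_le: "lam U \<le> b" if "\<And>C. closed C \<Longrightarrow> C \<subseteq> U \<Longrightarrow> \<nu> C \<le> b" for U b
    unfolding lam_def by (rule cSup_least[OF lam_ne]) (use that in auto)
  have lam_nonneg: "0 \<le> lam U" for U using lam_ge[of "{}" U] nu_empty by simp
  have lam_mono: "lam U \<le> lam U'" if "U \<subseteq> U'" for U U'
    by (rule lam_le) (use that in \<open>auto intro: lam_ge\<close>)
  have lam_approx: "\<exists>C. closed C \<and> C \<subseteq> U \<and> lam U - e < \<nu> C" if "e > 0" for U e
  proof (rule ccontr)
    assume neg: "\<not> (\<exists>C. closed C \<and> C \<subseteq> U \<and> lam U - e < \<nu> C)"
    have "lam U \<le> lam U - e"
    proof (rule lam_le)
      fix C assume "closed C" "C \<subseteq> U"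
      then show "\<nu> C \<le> lam U - e" using neg by (auto simp: not_less)
    qed
    with that show False by simp
  qed
  have lam_univ: "lam UNIV = 1"
    using lam_le[of UNIV 1] le1 lam_ge[of UNIV UNIV] univ by (auto intro: antisym)
  have "lam {} \<le> 0" by (rule lam_le) (simp add: nu_empty)
  then have lam_empty: "lam {} = 0" using lam_nonneg[of "{}"] by simp
  have lam_sub2: "lam (U \<union> U') \<le> lam U + lam U'" if "open U" "open U'" for U U'
  proof (cases "U = UNIV \<or> U' = UNIV")
    case True then show ?thesis using lam_nonneg by auto
  next
    case False
    then have ne: "-U \<noteq> {}" "-U' \<noteq> {}" by auto
    have cl: "closed (-U)" "closed (-U')" using that by auto
    show ?thesis
    proof (rule lam_le)
      fix C assume C: "closed C" "C \<subseteq> U \<union> U'"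
      define C1 where "C1 = C \<inter> {x. infdist x (-U') - infdist x (-U) \<le> 0}"
      define C2 where "C2 = C \<inter> {x. infdist x (-U) - infdist x (-U') \<le> 0}"
      have "closed {x. infdist x (-U') - infdist x (-U) \<le> 0}"
        by (intro closed_Collect_le continuous_intros continuous_on_const) 
      then have c1: "closed C1" unfolding C1_def using C by auto
      have "closed {x. infdist x (-U) - infdist x (-U') \<le> 0}"
        by (intro closed_Collect_le continuous_intros continuous_on_const)
      then have c2: "closed C2" unfolding C2_def using C by auto
      have "C \<subseteq> C1 \<union> C2" unfolding C1_def C2_def by auto
      have s1: "C1 \<subseteq> U"
      proof
        fix x assume x: "x \<in> C1"
        show "x \<in> U"
        proof (rule ccontr)
          assume "x \<notin> U"
          then have "infdist x (-U) = 0" by (simp add: infdist_zero)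
          then have "infdist x (-U') = 0" using x infdist_nonneg[of x "-U'"] by (auto simp: C1_def)
          then have "x \<in> -U'" using in_closed_iff_infdist_zero[OF cl(2) ne(2)] by simp
          then show False using x C \<open>x \<notin> U\<close> by (auto simp: C1_def)
        qed
      qed
      have s2: "C2 \<subseteq> U'"
      proof
        fix x assume x: "x \<in> C2"
        show "x \<in> U'"
        proof (rule ccontr)
          assume "x \<notin> U'"
          then have "infdist x (-U') = 0" by (simp add: infdist_zero)
          then have "infdist x (-U) = 0" using x infdist_nonneg[of x "-U"] by (auto simp: C2_def)
          then have "x \<in> -U" using in_closed_iff_infdist_zero[OF cl(1) ne(1)] by simp
          then show False using x C \<open>x \<notin> U'\<close> by (auto simp: C2_def)
        qed
      qed
      have "\<nu> C \<le> \<nu> (C1 \<union> C2)" using \<open>C \<subseteq> C1 \<union> C2\<close> by (rule mono)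
      also have "\<dots> \<le> \<nu> C1 + \<nu> C2" by (rule sub)
      also have "\<dots> \<le> lam U + lam U'" using lam_ge[OF c1 s1] lam_ge[OF c2 s2] by simp
      finally show "\<nu> C \<le> lam U + lam U'" .
    qed
  qed
  have lam_subN: "lam (\<Union>i<N. U i) \<le> (\<Sum>i<N. lam (U i))" if "\<And>i. open (U i)" for U and N :: nat
  proof (induction N)
    case 0 then show ?case using lam_empty by simp
  next
    case (Suc N)
    have "(\<Union>i<Suc N. U i) = (\<Union>i<N. U i) \<union> U N" by (auto simp: lessThan_Suc)
    then have "lam (\<Union>i<Suc N. U i) \<le> lam (\<Union>i<N. U i) + lam (U N)"
      using lam_sub2[of "\<Union>i<N. U i" "U N"] that open_UN[of "{..<N}" U] by auto
    then show ?case using Suc by simp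
  qed
  have lam_ctbl: "ennreal (lam (\<Union>i. U i)) \<le> (\<Sum>i. ennreal (lam (U i)))" if oU: "\<And>i. open (U i)" for U
  proof (cases "(\<Sum>i. ennreal (lam (U i))) = top")
    case True then show ?thesis by simp
  next
    case False
    define S where "S = enn2real (\<Sum>i. ennreal (lam (U i)))"
    have Seq: "(\<Sum>i. ennreal (lam (U i))) = ennreal S" "0 \<le> S"
      using False by (auto simp: S_def ennreal_enn2real_if less_top)
    have "lam (\<Union>i. U i) \<le> S"
    proof (rule lam_le)
      fix C assume C: "closed C" "C \<subseteq> (\<Union>i. U i)"
      have "compact C" using compact_Int_closed[OF cpt C(1)] by simp
      then obtain C' where C': "finite C'" "C \<subseteq> \<Union>(U ` C')"
        using C(2) oU by (metis compactE_image subset_UNIV)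
      obtain N where "C' \<subseteq> {..<N}" using finite_nat_bounded[OF C'(1)] by auto
      then have "C \<subseteq> (\<Union>i<N. U i)" using C' by blast
      then have "\<nu> C \<le> lam (\<Union>i<N. U i)" using C(1) by (rule lam_ge[rotated])
      also have "\<dots> \<le> (\<Sum>i<N. lam (U i))" using lam_subN oU by blast
      finally have "ennreal (\<nu> C) \<le> ennreal (\<Sum>i<N. lam (U i))" by (rule ennreal_leI)
      also have "\<dots> = (\<Sum>i<N. ennreal (lam (U i)))" using lam_nonneg by (simp add: sum_ennreal)
      also have "\<dots> \<le> (\<Sum>i. ennreal (lam (U i)))" by (rule sum_le_suminf) (auto intro: summableI)
      finally show "\<nu> C \<le> S" using Seq by (simp add: ennreal_le_iff)
    qed
    then show ?thesis using Seq by (simp add: ennreal_leI)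
  qed
  define m where "m A = Inf {lam U | U. open U \<and> A \<subseteq> U}" for A :: "'a set"
  have m_ne: "{lam U | U. open U \<and> A \<subseteq> U} \<noteq> {}" for A by (auto intro!: exI[of _ UNIV])
  have m_bdd: "bdd_below {lam U | U. open U \<and> A \<subseteq> U}" for A
    using lam_nonneg by (auto intro!: bdd_belowI[of _ 0])
  have m_le: "m A \<le> lam U" if "open U" "A \<subseteq> U" for A U
    unfolding m_def by (rule cInf_lower[OF _ m_bdd]) (use that in auto)
  have m_ge: "b \<le> m A" if "\<And>U. open U \<Longrightarrow> A \<subseteq> U \<Longrightarrow> b \<le> lam U" for A b
    unfolding m_def by (rule cInf_greatest[OF m_ne]) (use that in auto)
  have m_nonneg: "0 \<le> m A" for A by (rule m_ge) (rule lam_nonneg)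
  have m_approx: "\<exists>U. open U \<and> A \<subseteq> U \<and> lam U < m A + e" if "e > 0" for A e
  proof (rule ccontr)
    assume neg: "\<not> (\<exists>U. open U \<and> A \<subseteq> U \<and> lam U < m A + e)"
    have "m A + e \<le> m A"
    proof (rule m_ge)
      fix U assume "open U" "A \<subseteq> U"
      then show "m A + e \<le> lam U" using neg by (auto simp: not_less)
    qed
    with that show False by simp
  qed
  have m_mono: "m A \<le> m B" if "A \<subseteq> B" for A B
    by (rule m_ge) (use that in \<open>auto intro: m_le\<close>)
  have m_empty: "m {} = 0" using m_le[of "{}" "{}"] lam_empty m_nonneg[of "{}"] by auto
  have "1 \<le> m UNIV"
  proof (rule m_ge)
    fix U :: "'a set" assume "UNIV \<subseteq> U" then have "U = UNIV" by auto
    then show "1 \<le> lam U" using lam_univ by simp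
  qed
  then have m_univ: "m UNIV = 1"
    using m_le[of UNIV UNIV] lam_univ by auto
  have m_sub2: "m (A \<union> B) \<le> m A + m B" for A B
  proof (rule field_le_epsilon)
    fix e :: real assume e: "e > 0"
    obtain U where U: "open U" "A \<subseteq> U" "lam U < m A + e/2" using m_approx[of "e/2" A] e by auto
    obtain U' where U': "open U'" "B \<subseteq> U'" "lam U' < m B + e/2" using m_approx[of "e/2" B] e by auto
    have "m (A \<union> B) \<le> lam (U \<union> U')" using U U' by (intro m_le) auto
    also have "\<dots> \<le> lam U + lam U'" using U U' by (intro lam_sub2) auto
    finally show "m (A \<union> B) \<le> m A + m B + e" using U U' by simp
  qed
  have m_split: "m (X \<inter> U) + m (X - U) \<le> m X" if oU: "open U" for X U
  proof (rule m_ge)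
    fix W assume W: "open W" "X \<subseteq> W"
    show "m (X \<inter> U) + m (X - U) \<le> lam W"
    proof (rule field_le_epsilon)
      fix e :: real assume e: "e > 0"
      obtain C where C: "closed C" "C \<subseteq> W \<inter> U" "lam (W \<inter> U) - e/2 < \<nu> C"
        using lam_approx[of "e/2" "W \<inter> U"] e by auto
      obtain D where D: "closed D" "D \<subseteq> W - C" "lam (W - C) - e/2 < \<nu> D"
        using lam_approx[of "e/2" "W - C"] e by auto
      have "m (X \<inter> U) \<le> lam (W \<inter> U)" using W oU by (intro m_le) auto
      moreover have "m (X - U) \<le> lam (W - C)" using W C by (intro m_le) auto
      moreover have "\<nu> C + \<nu> D = \<nu> (C \<union> D)" using D by (intro add[symmetric]) auto
      moreover have "\<nu> (C \<union> D) \<le> lam W" using C D by (intro lam_ge) auto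
      ultimately show "m (X \<inter> U) + m (X - U) \<le> lam W + e" using C D by linarith
    qed
  qed
  define om where "om A = ennreal (m A)" for A
  have om_pos: "positive (Pow UNIV) om" unfolding positive_def om_def using m_empty by simp
  have om_inc: "increasing (Pow UNIV) om" unfolding increasing_def om_def
    using m_mono by (auto intro: ennreal_leI)
  have om_csa: "countably_subadditive (Pow UNIV) om"
    unfolding countably_subadditive_def
  proof (intro allI impI)
    fix A :: "nat \<Rightarrow> 'a set"
    show "om (\<Union>i. A i) \<le> (\<Sum>i. om (A i))"
    proof (rule ennreal_le_epsilon)
      fix e :: real assume e: "0 < e"
      have "\<forall>i. \<exists>U. open U \<and> A i \<subseteq> U \<and> lam U < m (A i) + e * (1/2)^Suc i"
        using m_approx e by auto
      then obtain U where U0: "\<forall>i. open (U i) \<and> A i \<subseteq> U i \<and> lam (U i) < m (A i) + e * (1/2)^Suc i"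
        using choice[OF \<open>\<forall>i. \<exists>U. _\<close>] by blast
      then have U: "\<And>i. open (U i)" "\<And>i. A i \<subseteq> U i" "\<And>i. lam (U i) < m (A i) + e * (1/2)^Suc i"
        by auto
      have Ule: "ennreal (lam (U i)) \<le> ennreal (m (A i)) + ennreal (e * (1/2)^Suc i)" for i
      proof -
        have "ennreal (lam (U i)) \<le> ennreal (m (A i) + e * (1/2)^Suc i)"
          using U(3)[of i] by (intro ennreal_leI) simp
        also have "\<dots> = ennreal (m (A i)) + ennreal (e * (1/2)^Suc i)"
          using m_nonneg[of "A i"] e by (intro ennreal_plus) auto
        finally show ?thesis .
      qed
      have "om (\<Union>i. A i) \<le> ennreal (lam (\<Union>i. U i))"
        unfolding om_def using U by (intro ennreal_leI m_le) auto
      also have "\<dots> \<le> (\<Sum>i. ennreal (lam (U i)))" using lam_ctbl U(1) by blast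
      also have "\<dots> \<le> (\<Sum>i. ennreal (m (A i)) + ennreal (e * (1/2)^Suc i))"
        by (rule suminf_le[OF Ule summableI summableI])
      also have "\<dots> = (\<Sum>i. om (A i)) + (\<Sum>i. ennreal (e * (1/2)^Suc i))"
        unfolding om_def by (rule suminf_add[symmetric]) (auto intro: summableI)
      also have "(\<Sum>i. ennreal (e * (1/2)^Suc i)) = ennreal e"
      proof -
        have "(\<lambda>i. e * (1/2::real)^Suc i) sums (e * 1)"
          by (intro sums_mult power_half_series)
        then show ?thesis using e by (subst suminf_ennreal2) (auto simp: sums_iff)
      qed
      finally show "om (\<Union>i. A i) \<le> (\<Sum>i. om (A i)) + ennreal e" .
    qed
  qed
  have oms: "outer_measure_space (Pow UNIV) om"
    unfolding outer_measure_space_def using om_pos om_inc om_csa by auto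
  define L where "L = lambda_system UNIV (Pow UNIV) om"
  have msL: "measure_space UNIV L om"
    unfolding L_def by (rule sigma_algebra.caratheodory_lemma[OF sigma_algebra_Pow oms])
  have openL: "U \<in> L" if "open U" for U
    unfolding L_def lambda_system_def
  proof (intro CollectI conjI ballI)
    fix X :: "'a set"
    have "X = (U \<inter> X) \<union> ((UNIV - U) \<inter> X)" by blast
    then have "m X \<le> m (U \<inter> X) + m ((UNIV - U) \<inter> X)"
      using m_sub2[of "U \<inter> X" "(UNIV - U) \<inter> X"] by simp
    moreover have "m (U \<inter> X) + m ((UNIV - U) \<inter> X) \<le> m X"
      using m_split[OF that, of X] by (simp add: Int_commute Diff_eq)
    ultimately have "m (U \<inter> X) + m ((UNIV - U) \<inter> X) = m X" by simp
    then show "om (U \<inter> X) + om ((UNIV - U) \<inter> X) = om X"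
      unfolding om_def using m_nonneg by (simp add: ennreal_plus[symmetric])
  qed auto
  have sL: "sigma_algebra UNIV L" using msL by (simp add: measure_space_def)
  have borelL: "sets borel \<subseteq> L"
    unfolding borel_def
    by (subst sets_measure_of) (auto intro!: sigma_algebra.sigma_sets_subset[OF sL] openL)
  have msB: "measure_space UNIV (sets borel) om"
    by (rule measure_down[OF msL _ borelL]) (use sets.sigma_algebra_axioms[of borel] in simp)
  define \<mu> where "\<mu> = measure_of UNIV (sets borel) om"
  have sigB: "sigma_algebra UNIV (sets borel)" using sets.sigma_algebra_axioms[of borel] by simp
  have posB: "positive (sets borel) om" and caB: "countably_additive (sets borel) om"
    using msB by (auto simp: measure_space_def)
  have sets_mu: "sets \<mu> = sets borel" unfolding \<mu>_def by (rule sigma_algebra.sets_measure_of_eq[OF sigB])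
  have space_mu: "space \<mu> = UNIV" unfolding \<mu>_def by (simp add: space_measure_of_conv)
  have em: "emeasure \<mu> A = om A" if "A \<in> sets borel" for A
    unfolding \<mu>_def by (rule emeasure_measure_of_sigma[OF sigB posB caB that])
  have meas: "measure \<mu> A = m A" if "A \<in> sets borel" for A
    unfolding measure_def em[OF that] om_def using m_nonneg by simp
  show ?thesis
  proof (intro exI[of _ \<mu>] conjI allI impI)
    show "sets \<mu> = sets borel" by (rule sets_mu)
    show "prob_space \<mu>" by (rule prob_spaceI) (simp add: space_mu em om_def m_univ)
  next
    fix U b assume U: "open U" and b: "\<forall>C. closed C \<longrightarrow> C \<subseteq> U \<longrightarrow> \<nu> C \<le> b"
    have "measure \<mu> U = m U" using U by (intro meas) auto
    also have "\<dots> \<le> lam U" using U by (intro m_le) auto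
    also have "\<dots> \<le> b" using b by (intro lam_le) auto
    finally show "measure \<mu> U \<le> b" .
  next
    fix C :: "'a set" assume C: "closed C"
    have "\<nu> C \<le> m C" by (rule m_ge) (use C in \<open>auto intro: lam_ge\<close>)
    also have "m C = measure \<mu> C" using C by (intro meas[symmetric]) auto
    finally show "\<nu> C \<le> measure \<mu> C" .
  qed
qed

lemma ennreal_add_le: "ennreal (a + b) \<le> ennreal a + ennreal b"
proof (cases "a \<ge> 0 \<and> b \<ge> 0")
  case True then show ?thesis by (simp add: ennreal_plus)
next
  case False
  then have "a + b \<le> a \<or> a + b \<le> b" by auto
  then show ?thesis
  proof
    assume "a + b \<le> a"
    then have "ennreal (a + b) \<le> ennreal a" by (rule ennreal_leI)
    then show ?thesis by (simp add: add_increasing2)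
  next
    assume "a + b \<le> b"
    then have "ennreal (a + b) \<le> ennreal b" by (rule ennreal_leI)
    then show ?thesis by (simp add: add_increasing)
  qed
qed

lemma W_scale_eq:
  assumes "t > 0"
  shows "W_alpha f \<alpha> (\<lambda>y. t * \<xi> y) s \<epsilon> n \<phi> = ennreal t * W_alpha f \<alpha> \<xi> s \<epsilon> n \<phi>"
proof (rule antisym)
  show "W_alpha f \<alpha> (\<lambda>y. t * \<xi> y) s \<epsilon> n \<phi> \<le> ennreal t * W_alpha f \<alpha> \<xi> s \<epsilon> n \<phi>"
    by (rule W_scale_le[OF assms])
  have "W_alpha f \<alpha> \<xi> s \<epsilon> n \<phi> = W_alpha f \<alpha> (\<lambda>y. (1/t) * (t * \<xi> y)) s \<epsilon> n \<phi>"
    using assms by simp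
  also have "\<dots> \<le> ennreal (1/t) * W_alpha f \<alpha> (\<lambda>y. t * \<xi> y) s \<epsilon> n \<phi>"
    by (rule W_scale_le) (use assms in simp)
  finally have "ennreal t * W_alpha f \<alpha> \<xi> s \<epsilon> n \<phi> \<le> ennreal t * (ennreal (1/t) * W_alpha f \<alpha> (\<lambda>y. t * \<xi> y) s \<epsilon> n \<phi>)"
    by (rule mult_left_mono) simp
  also have "\<dots> = W_alpha f \<alpha> (\<lambda>y. t * \<xi> y) s \<epsilon> n \<phi>"
    using assms by (simp add: mult.assoc[symmetric] ennreal_mult[symmetric])
  finally show "ennreal t * W_alpha f \<alpha> \<xi> s \<epsilon> n \<phi> \<le> W_alpha f \<alpha> (\<lambda>y. t * \<xi> y) s \<epsilon> n \<phi>" .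
qed

lemma continuous_funpow: "continuous_on UNIV (f::'a::topological_space \<Rightarrow> 'a) \<Longrightarrow> continuous_on UNIV (f ^^ i)"
proof (induction i)
  case 0 show ?case by (simp add: id_def)
next
  case (Suc i)
  then have h: "continuous_on UNIV (f ^^ i)" "continuous_on UNIV f" by auto
  have "continuous_on UNIV (f \<circ> f ^^ i)"
    by (rule continuous_on_compose[OF h(1)]) (rule continuous_on_subset[OF h(2)], simp)
  then show ?case by simp
qed

lemma open_bowen_ball:
  assumes "continuous_on UNIV f" "m \<ge> 1"
  shows "open (bowen_ball f \<alpha> m x \<epsilon>)"
proof -
  have eq: "bowen_ball f \<alpha> m x \<epsilon> = (\<Inter>i\<in>{..<m}. {y. exp (\<alpha> * real i) * dist ((f ^^ i) x) ((f ^^ i) y) < \<epsilon>})"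
  proof -
    have ne: "{..<m} \<noteq> {}" using assms(2) by (simp add: lessThan_empty_iff)
    have "(MAX i\<in>{..<m}. exp (\<alpha> * real i) * dist ((f ^^ i) x) ((f ^^ i) y)) < \<epsilon> \<longleftrightarrow>
          (\<forall>i\<in>{..<m}. exp (\<alpha> * real i) * dist ((f ^^ i) x) ((f ^^ i) y) < \<epsilon>)" for y
      by (subst Max_less_iff) (use ne in auto)
    then show ?thesis by (auto simp: bowen_ball_def dist_bowen_def)
  qed
  have "open {y. exp (\<alpha> * real i) * dist ((f ^^ i) x) ((f ^^ i) y) < \<epsilon>}" for i
  proof (rule open_Collect_less)
    show "continuous_on UNIV (\<lambda>y. exp (\<alpha> * real i) * dist ((f ^^ i) x) ((f ^^ i) y))"
      using continuous_funpow[OF assms(1), of i]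
      by (intro continuous_intros) auto
  qed (auto intro: continuous_intros)
  then show ?thesis unfolding eq by (intro open_INT) auto
qed

theorem mainTheorem9:
  fixes f :: "'a::metric_space \<Rightarrow> 'a" and \<phi> :: "'a \<Rightarrow> real" and K :: "'a set"
    and \<alpha> s \<epsilon> c :: real and n :: nat
  assumes "compact (UNIV :: 'a set)" and "continuous_on UNIV f"
    and "\<alpha> \<ge> 0" and "s > 0" and "n \<ge> 1" and "\<epsilon> > 0"
    and "continuous_on UNIV \<phi>" and "\<forall>x. \<phi> x > 0"
    and "K \<noteq> {}" and "compact K"
    and "W_alpha_set f \<alpha> K s \<epsilon> n \<phi> = ennreal c" and "c > 0"
  shows "\<exists>\<mu>. sets \<mu> = sets borel \<and> prob_space \<mu> \<and> emeasure \<mu> K = 1 \<and>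
           (\<forall>x m. n \<le> m \<longrightarrow>
              measure \<mu> (bowen_ball f \<alpha> m x \<epsilon>) \<le> (1 / c) * exp (- s * birkhoff_sum f \<phi> m x))"
proof -
  note cpt = assms(1) and fc = assms(2) and n1 = assms(5) and WK = assms(11) and c0 = assms(12)
  define Wf where "Wf \<xi> = W_alpha f \<alpha> \<xi> s \<epsilon> n \<phi>" for \<xi>
  have WKc: "Wf (indicator K) = ennreal c" using WK by (simp add: Wf_def W_alpha_set_def)
  define V where "V = {g :: 'a \<Rightarrow> real. \<exists>B. \<forall>y. \<bar>g y\<bar> \<le> B}"
  define p where "p g = enn2real (Wf (\<lambda>y. indicator K y * g y)) / c" for g
  have Vadd: "(\<lambda>y. g y + h y) \<in> V" if gV: "g \<in> V" and hV: "h \<in> V" for g h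
  proof -
    obtain B1 where "\<forall>y. \<bar>g y\<bar> \<le> B1" using gV unfolding V_def by blast
    moreover obtain B2 where "\<forall>y. \<bar>h y\<bar> \<le> B2" using hV unfolding V_def by blast
    ultimately have "\<forall>y. \<bar>g y + h y\<bar> \<le> B1 + B2"
      by (meson abs_triangle_ineq add_mono order_trans)
    then show ?thesis by (auto simp: V_def)
  qed
  have Vscale: "(\<lambda>y. t * g y) \<in> V" if gV: "g \<in> V" for g t
  proof -
    obtain B where B: "\<forall>y. \<bar>g y\<bar> \<le> B" using gV unfolding V_def by blast
    have "\<forall>y. \<bar>t * g y\<bar> \<le> \<bar>t\<bar> * B" using B by (simp add: abs_mult mult_left_mono)
    then show ?thesis by (auto simp: V_def)
  qed
  have indV: "indicator A \<in> V" for A :: "'a set"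
    unfolding V_def by (rule CollectI, rule exI[of _ 1]) (simp add: indicator_def)
  have Wfin: "Wf (\<lambda>y. indicator K y * g y) < top" if gV: "g \<in> V" for g
  proof -
    obtain B where B: "\<forall>y. \<bar>g y\<bar> \<le> B" using gV unfolding V_def by blast
    define B' where "B' = max B 1"
    have B'0: "B' > 0" by (simp add: B'_def)
    have "Wf (\<lambda>y. indicator K y * g y) \<le> Wf (\<lambda>y. B' * indicator K y)"
      unfolding Wf_def
    proof (rule W_mono)
      fix y show "indicator K y * g y \<le> B' * indicator K y"
        using B[rule_format, of y] by (auto simp: indicator_def B'_def)
    qed
    also have "\<dots> \<le> ennreal B' * Wf (indicator K)" unfolding Wf_def by (rule W_scale_le[OF B'0])
    also have "\<dots> < top" using WKc by (simp add: ennreal_mult_less_top)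
    finally show ?thesis .
  qed
  have padd: "p (\<lambda>y. g y + h y) \<le> p g + p h" if "g \<in> V" "h \<in> V" for g h
  proof -
    have "Wf (\<lambda>y. indicator K y * (g y + h y)) \<le> Wf (\<lambda>y. indicator K y * g y) + Wf (\<lambda>y. indicator K y * h y)"
      unfolding Wf_def by (rule W_sub) (simp add: distrib_left ennreal_add_le)
    then have "enn2real (Wf (\<lambda>y. indicator K y * (g y + h y))) \<le> enn2real (Wf (\<lambda>y. indicator K y * g y) + Wf (\<lambda>y. indicator K y * h y))"
      using Wfin[OF that(1)] Wfin[OF that(2)] by (intro enn2real_mono) auto
    also have "\<dots> = enn2real (Wf (\<lambda>y. indicator K y * g y)) + enn2real (Wf (\<lambda>y. indicator K y * h y))"
      using Wfin[OF that(1)] Wfin[OF that(2)] by (intro enn2real_plus) auto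
    finally have "enn2real (Wf (\<lambda>y. indicator K y * (g y + h y))) \<le> enn2real (Wf (\<lambda>y. indicator K y * g y)) + enn2real (Wf (\<lambda>y. indicator K y * h y))" .
    then show ?thesis unfolding p_def add_divide_distrib[symmetric] using c0 by (simp add: divide_right_mono)
  qed
  have pscale: "p (\<lambda>y. t * g y) = t * p g" if "g \<in> V" "t > 0" for g t
  proof -
    have "Wf (\<lambda>y. indicator K y * (t * g y)) = Wf (\<lambda>y. t * (indicator K y * g y))"
      by (simp add: algebra_simps)
    also have "\<dots> = ennreal t * Wf (\<lambda>y. indicator K y * g y)"
      unfolding Wf_def by (rule W_scale_eq[OF that(2)])
    finally show ?thesis unfolding p_def using that(2) by (simp add: enn2real_mult)
  qed
  have p1: "p (\<lambda>_. 1) = 1" unfolding p_def using WKc c0 by simp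
  have pnn: "0 \<le> p g" for g unfolding p_def using c0 by simp
  have pe: "t \<le> p (\<lambda>y. t * 1)" for t
  proof (cases "t > 0")
    case True
    then show ?thesis using pscale[of "\<lambda>_. 1" t] indV[of UNIV] p1 by simp
  next
    case False then show ?thesis using pnn[of "\<lambda>y. t * 1"] by simp
  qed
  have oneV: "(\<lambda>_. 1) \<in> V" using indV[of UNIV] by simp
  obtain L where Ladd: "\<forall>g\<in>V. \<forall>h\<in>V. L (\<lambda>y. g y + h y) = L g + L h"
    and Lscale: "\<forall>g\<in>V. \<forall>t. L (\<lambda>y. t * g y) = t * L g"
    and Lp: "\<forall>g\<in>V. L g \<le> p g" and L1: "L (\<lambda>_. 1) = 1"
    using hahn_banach_fun[of V p "\<lambda>_. 1", OF Vadd Vscale padd pscale oneV pe] by blast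
  define \<nu> where "\<nu> A = L (indicator A)" for A :: "'a set"
  have p_ind_le: "p (indicator A) \<le> enn2real (Wf (indicator B)) / c" if "A \<subseteq> B" "Wf (indicator B) < top" for A B
  proof -
    have "Wf (\<lambda>y. indicator K y * indicator A y) \<le> Wf (indicator B)"
      unfolding Wf_def by (rule W_mono) (use that in \<open>auto simp: indicator_def\<close>)
    then have "enn2real (Wf (\<lambda>y. indicator K y * indicator A y)) \<le> enn2real (Wf (indicator B))"
      using that(2) by (rule enn2real_mono)
    then show ?thesis unfolding p_def using c0 by (simp add: divide_right_mono)
  qed
  have nu_nonneg: "0 \<le> \<nu> A" for A
  proof -
    have "L (\<lambda>y. (-1) * indicator A y) \<le> p (\<lambda>y. (-1) * indicator A y)"
      using Lp Vscale[OF indV] by blast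
    also have "p (\<lambda>y. (-1) * indicator A y) = 0"
      unfolding p_def Wf_def by (subst W_nonpos) (auto simp: indicator_def)
    finally have le0: "L (\<lambda>y. (-1) * indicator A y) \<le> 0" .
    have "L (\<lambda>y. (-1) * indicator A y) = (-1) * L (indicator A)" using Lscale indV by blast
    then show ?thesis using le0 unfolding \<nu>_def by linarith
  qed
  have nu_add: "\<nu> (A \<union> B) = \<nu> A + \<nu> B" if "A \<inter> B = {}" for A B
  proof -
    have "indicator (A \<union> B) = (\<lambda>y. indicator A y + indicator B y :: real)"
      using that by (auto simp: indicator_def fun_eq_iff)
    then show ?thesis unfolding \<nu>_def using Ladd indV by auto
  qed
  have nu_univ: "\<nu> UNIV = 1" unfolding \<nu>_def using L1 by simp
  obtain \<mu> where mu: "sets \<mu> = sets borel" "prob_space \<mu>"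
    and mu_open: "\<forall>U b. open U \<longrightarrow> (\<forall>C. closed C \<longrightarrow> C \<subseteq> U \<longrightarrow> \<nu> C \<le> b) \<longrightarrow> measure \<mu> U \<le> b"
    and mu_closed: "\<forall>C. closed C \<longrightarrow> \<nu> C \<le> measure \<mu> C"
    using measure_from_content[OF cpt nu_nonneg nu_add nu_univ] by blast
  interpret P: prob_space \<mu> by (rule mu(2))
  have nuK: "\<nu> K = 1"
  proof -
    have "\<nu> (-K) \<le> p (indicator (-K))" unfolding \<nu>_def using Lp indV by blast
    also have "p (indicator (-K)) = 0"
      unfolding p_def Wf_def by (subst W_nonpos) (auto simp: indicator_def)
    finally have "\<nu> (-K) \<le> 0" .
    moreover have "\<nu> UNIV = \<nu> K + \<nu> (-K)" using nu_add[of K "-K"] by (simp add: Un_commute)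
    moreover have "\<nu> K \<le> 1" using nu_add[of K "-K"] nu_nonneg[of "-K"] nu_univ by simp
    ultimately show ?thesis using nu_univ nu_nonneg[of "-K"] by linarith
  qed
  have Kclosed: "closed K" using assms(10) by (rule compact_imp_closed)
  have "1 \<le> measure \<mu> K" using mu_closed Kclosed nuK by auto
  moreover have "measure \<mu> K \<le> 1" by (rule P.prob_le_1)
  ultimately have mK: "measure \<mu> K = 1" by simp
  have "emeasure \<mu> K = 1"
    using mK P.emeasure_eq_measure[of K] by simp
  moreover have "measure \<mu> (bowen_ball f \<alpha> m x \<epsilon>) \<le> (1 / c) * exp (- s * birkhoff_sum f \<phi> m x)"
    if nm: "n \<le> m" for x m
  proof -
    let ?B = "bowen_ball f \<alpha> m x \<epsilon>"
    have WB: "Wf (indicator ?B) \<le> ennreal (exp (- s * birkhoff_sum f \<phi> m x))"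
      unfolding Wf_def by (rule W_ball[OF nm])
    then have WBfin: "Wf (indicator ?B) < top" using ennreal_less_top order.strict_trans1 by blast
    have eB: "enn2real (Wf (indicator ?B)) \<le> exp (- s * birkhoff_sum f \<phi> m x)"
      using enn2real_mono[OF WB] by simp
    have oB: "open ?B" using open_bowen_ball[OF fc] nm n1 by auto
    show ?thesis
    proof (rule mu_open[rule_format, OF oB])
      fix C assume "closed C" "C \<subseteq> ?B"
      have "\<nu> C \<le> p (indicator C)" unfolding \<nu>_def using Lp indV by blast
      also have "\<dots> \<le> enn2real (Wf (indicator ?B)) / c" by (rule p_ind_le[OF \<open>C \<subseteq> ?B\<close> WBfin])
      also have "\<dots> \<le> exp (- s * birkhoff_sum f \<phi> m x) / c"
        using eB c0 by (simp add: divide_right_mono)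
      finally show "\<nu> C \<le> (1 / c) * exp (- s * birkhoff_sum f \<phi> m x)" by simp
    qed
  qed
  ultimately show ?thesis using mu(1,2) by blast
qed

end
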